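(* Let $X$ be an affine variety and $\mathcal{A}\subseteq\mathcal{D}(X)$ a graded cofinite subalgebra. Then the base $A=\mathcal{A}\cap\mathcal{O}(X)$ is a finitely generated $\mathbb{C}$-algebra and $\mathcal{O}(X)$ is a finitely generated $A$-module. In other words, with $Y=\operatorname{Spec}A$, the morphism $X\to Y$ is a finite surjective morphism of affine varieties.
   Context: Varieties are over $\mathbb{C}$ and irreducible. $\mathcal{D}(X)$ is the algebra of ($\mathbb{C}$-linear, Grothendieck) differential operators on $\mathcal{O}(X)$, filtered by order, with commutative associated graded algebra $\overline{\mathcal{D}}(X)$ (whose degree-$0$ part is $\mathcal{O}(X)$). A subalgebra $\mathcal{A}$ has induced filtration $\mathcal{A}\cap\mathcal{D}(X)_{\le d}$ with associated graded $\overline{\mathcal{A}}\subseteq\overline{\mathcal{D}}(X)$; $\mathcal{A}$ is graded cofinite if $\overline{\mathcal{D}}(X)$ is a finitely generated $\overline{\mathcal{A}}$-module. *)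

theory Defs
  imports "HOL-Algebra.Algebra" Complex_Main
begin

definition is_calg :: "('a, 'b) ring_scheme \<Rightarrow> (complex \<Rightarrow> 'a) \<Rightarrow> bool" where
  "is_calg R \<iota> \<longleftrightarrow> cring R \<and> (\<forall>c. \<iota> c \<in> carrier R) \<and> \<iota> 0 = \<zero>\<^bsub>R\<^esub> \<and> \<iota> 1 = \<one>\<^bsub>R\<^esub> \<and>
     (\<forall>a b. \<iota> (a + b) = \<iota> a \<oplus>\<^bsub>R\<^esub> \<iota> b) \<and> (\<forall>a b. \<iota> (a * b) = \<iota> a \<otimes>\<^bsub>R\<^esub> \<iota> b)"

definition fg_calg :: "('a, 'b) ring_scheme \<Rightarrow> (complex \<Rightarrow> 'a) \<Rightarrow> 'a set \<Rightarrow> bool" where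
  "fg_calg R \<iota> B \<longleftrightarrow> (\<exists>S. finite S \<and> S \<subseteq> B \<and> B = generate_ring R (range \<iota> \<union> S))"

text \<open>Coordinate ring of an (irreducible) affine variety over C: a finitely generated
C-algebra which is an integral domain.\<close>
definition affine_variety :: "('a, 'b) ring_scheme \<Rightarrow> (complex \<Rightarrow> 'a) \<Rightarrow> bool" where
  "affine_variety R \<iota> \<longleftrightarrow> domain R \<and> is_calg R \<iota> \<and> fg_calg R \<iota> (carrier R)"

definition fg_module_over :: "('a, 'b) ring_scheme \<Rightarrow> 'a set \<Rightarrow> bool" where
  "fg_module_over R A \<longleftrightarrow> (\<exists>G. finite G \<and> G \<subseteq> carrier R \<and>
     (\<forall>x\<in>carrier R. \<exists>a \<in> G \<rightarrow> A. x = finsum R (\<lambda>g. a g \<otimes>\<^bsub>R\<^esub> g) G))"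

definition op_zero :: "('a, 'b) ring_scheme \<Rightarrow> 'a \<Rightarrow> 'a" where
  "op_zero R = (\<lambda>x. if x \<in> carrier R then \<zero>\<^bsub>R\<^esub> else undefined)"
definition op_add :: "('a, 'b) ring_scheme \<Rightarrow> ('a \<Rightarrow> 'a) \<Rightarrow> ('a \<Rightarrow> 'a) \<Rightarrow> 'a \<Rightarrow> 'a" where
  "op_add R f g = (\<lambda>x. if x \<in> carrier R then f x \<oplus>\<^bsub>R\<^esub> g x else undefined)"
definition op_minus :: "('a, 'b) ring_scheme \<Rightarrow> ('a \<Rightarrow> 'a) \<Rightarrow> ('a \<Rightarrow> 'a) \<Rightarrow> 'a \<Rightarrow> 'a" where
  "op_minus R f g = (\<lambda>x. if x \<in> carrier R then f x \<ominus>\<^bsub>R\<^esub> g x else undefined)"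
definition op_comp :: "('a, 'b) ring_scheme \<Rightarrow> ('a \<Rightarrow> 'a) \<Rightarrow> ('a \<Rightarrow> 'a) \<Rightarrow> 'a \<Rightarrow> 'a" where
  "op_comp R f g = (\<lambda>x. if x \<in> carrier R then f (g x) else undefined)"
definition mult_op :: "('a, 'b) ring_scheme \<Rightarrow> 'a \<Rightarrow> 'a \<Rightarrow> 'a" where
  "mult_op R r = (\<lambda>x. if x \<in> carrier R then r \<otimes>\<^bsub>R\<^esub> x else undefined)"
definition op_sum :: "('a, 'b) ring_scheme \<Rightarrow> ('a \<Rightarrow> 'a) list \<Rightarrow> 'a \<Rightarrow> 'a" where
  "op_sum R fs = foldr (op_add R) fs (op_zero R)"

definition clinear :: "('a, 'b) ring_scheme \<Rightarrow> (complex \<Rightarrow> 'a) \<Rightarrow> ('a \<Rightarrow> 'a) \<Rightarrow> bool" where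
  "clinear R \<iota> f \<longleftrightarrow> f \<in> carrier R \<rightarrow> carrier R \<and> (\<forall>x. x \<notin> carrier R \<longrightarrow> f x = undefined) \<and>
     (\<forall>x\<in>carrier R. \<forall>y\<in>carrier R. f (x \<oplus>\<^bsub>R\<^esub> y) = f x \<oplus>\<^bsub>R\<^esub> f y) \<and>
     (\<forall>c. \<forall>x\<in>carrier R. f (\<iota> c \<otimes>\<^bsub>R\<^esub> x) = \<iota> c \<otimes>\<^bsub>R\<^esub> f x)"

definition commutator :: "('a, 'b) ring_scheme \<Rightarrow> ('a \<Rightarrow> 'a) \<Rightarrow> 'a \<Rightarrow> 'a \<Rightarrow> 'a" where
  "commutator R \<phi> r = op_minus R (op_comp R \<phi> (mult_op R r)) (op_comp R (mult_op R r) \<phi>)"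

text \<open>Grothendieck differential operators of order at most n:
 D_0 = O(X)-linear endomorphisms, D_(n+1) = C-linear phi with [phi, r] in D_n for all r.\<close>
fun diffop_le :: "('a, 'b) ring_scheme \<Rightarrow> (complex \<Rightarrow> 'a) \<Rightarrow> nat \<Rightarrow> ('a \<Rightarrow> 'a) set" where
  "diffop_le R \<iota> 0 = {\<phi>. clinear R \<iota> \<phi> \<and> (\<forall>r\<in>carrier R. commutator R \<phi> r = op_zero R)}"
| "diffop_le R \<iota> (Suc n) = {\<phi>. clinear R \<iota> \<phi> \<and> (\<forall>r\<in>carrier R. commutator R \<phi> r \<in> diffop_le R \<iota> n)}"

text \<open>D_(d-1), with D_(-1) = 0.\<close>
definition diffop_prev :: "('a, 'b) ring_scheme \<Rightarrow> (complex \<Rightarrow> 'a) \<Rightarrow> nat \<Rightarrow> ('a \<Rightarrow> 'a) set" where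
  "diffop_prev R \<iota> d = (if d = 0 then {op_zero R} else diffop_le R \<iota> (d - 1))"

definition diffops :: "('a, 'b) ring_scheme \<Rightarrow> (complex \<Rightarrow> 'a) \<Rightarrow> ('a \<Rightarrow> 'a) set" where
  "diffops R \<iota> = (\<Union>n. diffop_le R \<iota> n)"

definition diffop_subalgebra :: "('a, 'b) ring_scheme \<Rightarrow> (complex \<Rightarrow> 'a) \<Rightarrow> ('a \<Rightarrow> 'a) set \<Rightarrow> bool" where
  "diffop_subalgebra R \<iota> \<A> \<longleftrightarrow> \<A> \<subseteq> diffops R \<iota> \<and> mult_op R \<one>\<^bsub>R\<^esub> \<in> \<A> \<and>
     (\<forall>\<phi>\<in>\<A>. \<forall>\<psi>\<in>\<A>. op_add R \<phi> \<psi> \<in> \<A> \<and> op_comp R \<phi> \<psi> \<in> \<A>) \<and>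
     (\<forall>c. \<forall>\<phi>\<in>\<A>. op_comp R (mult_op R (\<iota> c)) \<phi> \<in> \<A>)"

text \<open>The base A = (calligraphic A) intersected with O(X), O(X) embedded as multiplication operators.\<close>
definition base_ring :: "('a, 'b) ring_scheme \<Rightarrow> ('a \<Rightarrow> 'a) set \<Rightarrow> 'a set" where
  "base_ring R \<A> = {r \<in> carrier R. mult_op R r \<in> \<A>}"

text \<open>An element of the associated graded of B (B = D(X) or a subalgebra with induced filtration)
is represented by a sequence s with s d in B intersected with D_d, representing the class of s d in
(B cap D_d)/(B cap D_(d-1)); only finitely many classes are nonzero.\<close>
definition gr_elem :: "('a, 'b) ring_scheme \<Rightarrow> (complex \<Rightarrow> 'a) \<Rightarrow> ('a \<Rightarrow> 'a) set \<Rightarrow> (nat \<Rightarrow> 'a \<Rightarrow> 'a) \<Rightarrow> bool" where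
  "gr_elem R \<iota> B s \<longleftrightarrow> (\<forall>d. s d \<in> B \<inter> diffop_le R \<iota> d) \<and> finite {d. s d \<notin> diffop_prev R \<iota> d}"

definition gr_eq :: "('a, 'b) ring_scheme \<Rightarrow> (complex \<Rightarrow> 'a) \<Rightarrow> (nat \<Rightarrow> 'a \<Rightarrow> 'a) \<Rightarrow> (nat \<Rightarrow> 'a \<Rightarrow> 'a) \<Rightarrow> bool" where
  "gr_eq R \<iota> s t \<longleftrightarrow> (\<forall>d. op_minus R (s d) (t d) \<in> diffop_prev R \<iota> d)"

definition gr_zero :: "('a, 'b) ring_scheme \<Rightarrow> nat \<Rightarrow> 'a \<Rightarrow> 'a" where
  "gr_zero R = (\<lambda>d. op_zero R)"
definition gr_add :: "('a, 'b) ring_scheme \<Rightarrow> (nat \<Rightarrow> 'a \<Rightarrow> 'a) \<Rightarrow> (nat \<Rightarrow> 'a \<Rightarrow> 'a) \<Rightarrow> nat \<Rightarrow> 'a \<Rightarrow> 'a" where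
  "gr_add R s t = (\<lambda>d. op_add R (s d) (t d))"
definition gr_mul :: "('a, 'b) ring_scheme \<Rightarrow> (nat \<Rightarrow> 'a \<Rightarrow> 'a) \<Rightarrow> (nat \<Rightarrow> 'a \<Rightarrow> 'a) \<Rightarrow> nat \<Rightarrow> 'a \<Rightarrow> 'a" where
  "gr_mul R s t = (\<lambda>d. op_sum R (map (\<lambda>i. op_comp R (s i) (t (d - i))) [0..<Suc d]))"

text \<open>Graded cofinite: gr D(X) is a finitely generated gr(A)-module.\<close>
definition graded_cofinite :: "('a, 'b) ring_scheme \<Rightarrow> (complex \<Rightarrow> 'a) \<Rightarrow> ('a \<Rightarrow> 'a) set \<Rightarrow> bool" where
  "graded_cofinite R \<iota> \<A> \<longleftrightarrow>
     (\<exists>gs. (\<forall>g\<in>set gs. gr_elem R \<iota> (diffops R \<iota>) g) \<and>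
        (\<forall>s. gr_elem R \<iota> (diffops R \<iota>) s \<longrightarrow>
           (\<exists>as. length as = length gs \<and> (\<forall>a\<in>set as. gr_elem R \<iota> \<A> a) \<and>
              gr_eq R \<iota> s (foldr (gr_add R) (map2 (gr_mul R) as gs) (gr_zero R)))))"

end

theory Submission
  imports Defs
begin

inductive_set lspan :: "('a, 'b) ring_scheme \<Rightarrow> 'a set \<Rightarrow> 'a set \<Rightarrow> 'a set"
  for R T G where
    lzero: "\<zero>\<^bsub>R\<^esub> \<in> lspan R T G"
  | lgen: "t \<in> T \<Longrightarrow> g \<in> G \<Longrightarrow> t \<otimes>\<^bsub>R\<^esub> g \<in> lspan R T G"
  | ladd: "x \<in> lspan R T G \<Longrightarrow> y \<in> lspan R T G \<Longrightarrow> x \<oplus>\<^bsub>R\<^esub> y \<in> lspan R T G"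

definition submod :: "('a, 'b) ring_scheme \<Rightarrow> 'a set \<Rightarrow> 'a set \<Rightarrow> bool" where
  "submod R T N \<longleftrightarrow> \<zero>\<^bsub>R\<^esub> \<in> N \<and> (\<forall>x\<in>N. \<forall>y\<in>N. x \<oplus>\<^bsub>R\<^esub> y \<in> N) \<and> (\<forall>t\<in>T. \<forall>x\<in>N. t \<otimes>\<^bsub>R\<^esub> x \<in> N)"

definition noeth :: "('a, 'b) ring_scheme \<Rightarrow> 'a set \<Rightarrow> bool" where
  "noeth R T \<longleftrightarrow> (\<forall>I. I \<subseteq> T \<and> submod R T I \<longrightarrow> (\<exists>F. finite F \<and> F \<subseteq> I \<and> I = lspan R T F))"

context cring begin

lemma minus_plus_cancel: "x \<in> carrier R \<Longrightarrow> z \<in> carrier R \<Longrightarrow> (x \<ominus> z) \<oplus> z = x"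
  by (simp add: a_minus_def a_assoc l_neg)

lemma minus_cancel_left: "a \<in> carrier R \<Longrightarrow> m \<in> carrier R \<Longrightarrow> m' \<in> carrier R \<Longrightarrow> (a \<oplus> m) \<ominus> (a \<oplus> m') = m \<ominus> m'"
proof -
  assume c: "a \<in> carrier R" "m \<in> carrier R" "m' \<in> carrier R"
  have "(a \<oplus> m) \<ominus> (a \<oplus> m') = a \<oplus> (m \<oplus> (\<ominus> a \<oplus> \<ominus> m'))" using c by (simp add: a_minus_def minus_add a_assoc)
  also have "\<dots> = m \<oplus> (a \<oplus> (\<ominus> a \<oplus> \<ominus> m'))" using c by (simp add: a_lcomm)
  also have "\<dots> = m \<ominus> m'" using c by (simp add: r_neg2 a_minus_def)
  finally show ?thesis .
qed

lemma lspan_carrier: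
  assumes "T \<subseteq> carrier R" "G \<subseteq> carrier R"
  shows "x \<in> lspan R T G \<Longrightarrow> x \<in> carrier R"
  by (induction rule: lspan.induct) (use assms in auto)

lemma lspan_min:
  assumes "submod R T N" "G \<subseteq> N"
  shows "lspan R T G \<subseteq> N"
proof
  fix x assume "x \<in> lspan R T G" then show "x \<in> N"
    by (induction rule: lspan.induct) (use assms in \<open>auto simp: submod_def\<close>)
qed

lemma lspan_mono:
  assumes "T \<subseteq> T'" "G \<subseteq> G'"
  shows "lspan R T G \<subseteq> lspan R T' G'"
proof
  fix x assume "x \<in> lspan R T G" then show "x \<in> lspan R T' G'"
    by (induction rule: lspan.induct) (use assms in \<open>auto intro: lspan.intros\<close>)
qed

lemma lspan_submod:
  assumes T: "subring T R" and G: "G \<subseteq> carrier R" and T': "T' \<subseteq> T"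
  shows "submod R T' (lspan R T G)"
proof -
  have TC: "T \<subseteq> carrier R" using subringE(1)[OF T] .
  have "s \<otimes> x \<in> lspan R T G" if s: "s \<in> T" and x: "x \<in> lspan R T G" for s x
    using x
  proof (induction rule: lspan.induct)
    case lzero
    have "s \<otimes> \<zero> = \<zero>" using s TC by auto
    then show ?case by (simp add: lspan.lzero)
  next
    case (lgen t g)
    have "s \<in> carrier R" "t \<in> carrier R" "g \<in> carrier R" using s lgen TC G by auto
    then have "s \<otimes> (t \<otimes> g) = (s \<otimes> t) \<otimes> g" by (simp add: m_assoc)
    then show ?case using lgen s subringE(6)[OF T] by (auto intro: lspan.intros)
  next
    case (ladd x y)
    have "s \<otimes> (x \<oplus> y) = s \<otimes> x \<oplus> s \<otimes> y"
      using s TC ladd lspan_carrier[OF TC G] by (auto simp: r_distr)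
    then show ?case using ladd by (auto intro: lspan.intros)
  qed
  then show ?thesis unfolding submod_def using T' by (auto intro: lspan.intros)
qed

lemma lspan_neg:
  assumes T: "subring T R" and G: "G \<subseteq> carrier R" and x: "x \<in> lspan R T G"
  shows "\<ominus> x \<in> lspan R T G"
proof -
  have "\<ominus> \<one> \<in> T" using subringE(3,5)[OF T] by auto
  then have "(\<ominus> \<one>) \<otimes> x \<in> lspan R T G" using lspan_submod[OF T G order_refl] x
    unfolding submod_def by auto
  moreover have "x \<in> carrier R" using lspan_carrier[OF subringE(1)[OF T] G x] .
  ultimately show ?thesis by (simp add: l_minus)
qed

lemma lspan_insert:
  assumes T: "subring T R" and G: "G \<subseteq> carrier R" and g: "g \<in> carrier R"
  shows "lspan R T (insert g G) = {t \<otimes> g \<oplus> m | t m. t \<in> T \<and> m \<in> lspan R T G}"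
proof
  have TC: "T \<subseteq> carrier R" using subringE(1)[OF T] .
  note LC = lspan_carrier[OF TC G]
  show "lspan R T (insert g G) \<subseteq> {t \<otimes> g \<oplus> m | t m. t \<in> T \<and> m \<in> lspan R T G}"
  proof
    fix x assume "x \<in> lspan R T (insert g G)"
    then show "x \<in> {t \<otimes> g \<oplus> m | t m. t \<in> T \<and> m \<in> lspan R T G}"
    proof (induction rule: lspan.induct)
      case lzero
      have "\<zero> = \<zero> \<otimes> g \<oplus> \<zero>" using g by simp
      then show ?case using subringE(2)[OF T] by (blast intro: lspan.intros)
    next
      case (lgen t h)
      show ?case
      proof (cases "h = g")
        case True
        have "t \<otimes> h = t \<otimes> g \<oplus> \<zero>" using True lgen TC g by auto
        then show ?thesis using lgen by (blast intro: lspan.intros)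
      next
        case False
        then have h: "h \<in> G" using lgen by auto
        have hc: "h \<in> carrier R" using h G by auto
        have "t \<otimes> h = \<zero> \<otimes> g \<oplus> t \<otimes> h" using hc lgen TC g by auto
        then show ?thesis using lgen h subringE(2)[OF T] by (blast intro: lspan.intros)
      qed
    next
      case (ladd x y)
      from ladd.IH obtain t m t' m' where tm: "x = t \<otimes> g \<oplus> m" "t \<in> T" "m \<in> lspan R T G"
        "y = t' \<otimes> g \<oplus> m'" "t' \<in> T" "m' \<in> lspan R T G" by blast
      have "t \<in> carrier R" "t' \<in> carrier R" "m \<in> carrier R" "m' \<in> carrier R"
        using tm TC LC by auto
      then have "x \<oplus> y = (t \<oplus> t') \<otimes> g \<oplus> (m \<oplus> m')"
        using tm g by (simp add: l_distr a_ac)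
      then show ?case using tm subringE(7)[OF T] by (blast intro: lspan.intros)
    qed
  qed
  show "{t \<otimes> g \<oplus> m | t m. t \<in> T \<and> m \<in> lspan R T G} \<subseteq> lspan R T (insert g G)"
    using lspan_mono[of T T G "insert g G"] by (auto intro!: lspan.intros)
qed

lemma lspan_fin_coeffs:
  "x \<in> lspan R T G \<Longrightarrow> \<exists>F. finite F \<and> F \<subseteq> T \<and> x \<in> lspan R F G"
proof (induction rule: lspan.induct)
  case lzero
  then show ?case by (auto intro: lspan.intros)
next
  case (lgen t g)
  then show ?case by (intro exI[of _ "{t}"]) (auto intro: lspan.intros)
next
  case (ladd x y)
  then obtain F1 F2 where "finite F1" "F1 \<subseteq> T" "x \<in> lspan R F1 G"
    "finite F2" "F2 \<subseteq> T" "y \<in> lspan R F2 G" by blast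
  then show ?case using lspan_mono[of F1 "F1 \<union> F2" G G] lspan_mono[of F2 "F1 \<union> F2" G G]
    by (intro exI[of _ "F1 \<union> F2"]) (auto intro: lspan.intros)
qed

end

context cring begin

lemma lspan_empty: "lspan R T {} = {\<zero>}"
proof
  show "lspan R T {} \<subseteq> {\<zero>}"
  proof
    fix x assume "x \<in> lspan R T {}" then show "x \<in> {\<zero>}"
      by (induction rule: lspan.induct) auto
  qed
qed (auto intro: lspan.intros)

lemma submod_neg:
  assumes T: "subring T R" and N: "submod R T N" "N \<subseteq> carrier R" and x: "x \<in> N"
  shows "\<ominus> x \<in> N"
proof -
  have "\<ominus> \<one> \<in> T" using subringE(3,5)[OF T] by auto
  then have "(\<ominus> \<one>) \<otimes> x \<in> N" using N x unfolding submod_def by auto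
  then show ?thesis using x N by (simp add: l_minus subsetD)
qed

lemma noeth_submod_fg:
  assumes T: "subring T R" and nT: "noeth R T" and fG: "finite G" 
  shows "G \<subseteq> carrier R \<Longrightarrow> submod R T N \<Longrightarrow> N \<subseteq> lspan R T G \<Longrightarrow> \<exists>H. finite H \<and> H \<subseteq> N \<and> N = lspan R T H"
  using fG
proof (induction G arbitrary: N rule: finite_induct)
  case empty
  then have "N = {\<zero>}" unfolding submod_def using lspan_empty by auto
  then show ?case using lspan_empty by (intro exI[of _ "{}"]) auto
next
  case (insert g G)
  have TC: "T \<subseteq> carrier R" using subringE(1)[OF T] .
  have GC: "G \<subseteq> carrier R" and gC: "g \<in> carrier R" using insert(4) by auto
  define L where "L = lspan R T G"
  have LC: "L \<subseteq> carrier R" unfolding L_def using lspan_carrier[OF TC GC] by auto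
  have Lsub: "submod R T L" unfolding L_def using lspan_submod[OF T GC order_refl] .
  have "lspan R T (insert g G) \<subseteq> carrier R" using lspan_carrier[OF TC insert(4)] by blast
  then have NC: "N \<subseteq> carrier R" using insert(6) by blast
  have Nsub: "submod R T N" by fact
  define J where "J = {t \<in> T. \<exists>m\<in>L. t \<otimes> g \<oplus> m \<in> N}"
  have "submod R T J"
    unfolding submod_def
  proof (intro conjI ballI)
    have "\<zero> \<otimes> g \<oplus> \<zero> = \<zero>" using gC by simp
    moreover have "\<zero> \<in> L" "\<zero> \<in> N" using Lsub Nsub unfolding submod_def by auto
    ultimately show "\<zero> \<in> J" unfolding J_def using subringE(2)[OF T] by (auto intro!: bexI[of _ "\<zero>"])
  next
    fix x y assume "x \<in> J" "y \<in> J"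
    then obtain m m' where mm: "x \<in> T" "y \<in> T" "m \<in> L" "m' \<in> L" "x \<otimes> g \<oplus> m \<in> N" "y \<otimes> g \<oplus> m' \<in> N"
      unfolding J_def by auto
    have c: "x \<in> carrier R" "y \<in> carrier R" "m \<in> carrier R" "m' \<in> carrier R" using mm TC LC by auto
    have "(x \<otimes> g \<oplus> m) \<oplus> (y \<otimes> g \<oplus> m') = (x \<oplus> y) \<otimes> g \<oplus> (m \<oplus> m')"
      using c gC by (simp add: l_distr a_ac)
    moreover have "(x \<otimes> g \<oplus> m) \<oplus> (y \<otimes> g \<oplus> m') \<in> N" using mm(5,6) Nsub unfolding submod_def by blast
    ultimately have "(x \<oplus> y) \<otimes> g \<oplus> (m \<oplus> m') \<in> N" by simp
    moreover have "m \<oplus> m' \<in> L" using mm Lsub unfolding submod_def by auto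
    ultimately show "x \<oplus> y \<in> J" unfolding J_def using mm subringE(7)[OF T] by auto
  next
    fix s x assume "s \<in> T" "x \<in> J"
    then obtain m where mm: "s \<in> T" "x \<in> T" "m \<in> L" "x \<otimes> g \<oplus> m \<in> N"
      unfolding J_def by auto
    have c: "x \<in> carrier R" "s \<in> carrier R" "m \<in> carrier R" using mm TC LC by auto
    have "s \<otimes> (x \<otimes> g \<oplus> m) = (s \<otimes> x) \<otimes> g \<oplus> s \<otimes> m"
      using c gC by (simp add: r_distr m_assoc)
    moreover have "s \<otimes> (x \<otimes> g \<oplus> m) \<in> N" using mm(1,4) Nsub unfolding submod_def by blast
    ultimately have "(s \<otimes> x) \<otimes> g \<oplus> s \<otimes> m \<in> N" by simp
    moreover have "s \<otimes> m \<in> L" using mm Lsub unfolding submod_def by auto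
    ultimately show "s \<otimes> x \<in> J" unfolding J_def using mm subringE(6)[OF T] by auto
  qed
  moreover have "J \<subseteq> T" unfolding J_def by auto
  ultimately obtain E where E: "finite E" "E \<subseteq> J" "J = lspan R T E"
    using nT unfolding noeth_def by blast
  have "\<forall>e\<in>E. \<exists>m. m \<in> L \<and> e \<otimes> g \<oplus> m \<in> N" using E unfolding J_def by auto
  from bchoice[OF this] obtain mw where mw: "\<And>e. e \<in> E \<Longrightarrow> mw e \<in> L \<and> e \<otimes> g \<oplus> mw e \<in> N"
    by blast
  define w where "w e = e \<otimes> g \<oplus> mw e" for e
  have wN: "w ` E \<subseteq> N" using mw unfolding w_def by auto
  have EC: "E \<subseteq> carrier R" using E TC unfolding J_def by auto
  have wC: "w ` E \<subseteq> carrier R" using wN NC by auto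
  have claim: "\<exists>z \<in> lspan R T (w ` E). \<exists>m' \<in> L. z = t \<otimes> g \<oplus> m'" if "t \<in> lspan R T E" for t
    using that
  proof (induction rule: lspan.induct)
    case lzero
    have "\<zero> = \<zero> \<otimes> g \<oplus> \<zero>" using gC by simp
    then show ?case using Lsub unfolding submod_def by (blast intro: lspan.intros)
  next
    case (lgen s e)
    have c: "s \<in> carrier R" "e \<in> carrier R" "mw e \<in> carrier R" using lgen TC EC mw LC by auto
    have "s \<otimes> w e = (s \<otimes> e) \<otimes> g \<oplus> s \<otimes> mw e" unfolding w_def
      using c gC by (simp add: r_distr m_assoc)
    moreover have "s \<otimes> w e \<in> lspan R T (w ` E)" using lgen by (auto intro: lspan.intros)
    moreover have "s \<otimes> mw e \<in> L" using Lsub mw lgen unfolding submod_def by auto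
    ultimately show ?case by blast
  next
    case (ladd x y)
    then obtain z z' m m' where zz: "z \<in> lspan R T (w ` E)" "z' \<in> lspan R T (w ` E)" "m \<in> L" "m' \<in> L"
      "z = x \<otimes> g \<oplus> m" "z' = y \<otimes> g \<oplus> m'" by blast
    have c: "x \<in> carrier R" "y \<in> carrier R" "m \<in> carrier R" "m' \<in> carrier R"
      using ladd.hyps lspan_carrier[OF TC EC] zz LC by auto
    have "z \<oplus> z' = (x \<oplus> y) \<otimes> g \<oplus> (m \<oplus> m')" using zz c gC by (simp add: l_distr a_ac)
    moreover have "m \<oplus> m' \<in> L" using zz Lsub unfolding submod_def by auto
    moreover have "z \<oplus> z' \<in> lspan R T (w ` E)" using zz by (auto intro: lspan.intros)
    ultimately show ?case by blast
  qed
  define N' where "N' = N \<inter> L"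
  have "submod R T N'" using Nsub Lsub unfolding N'_def submod_def by auto
  moreover have "N' \<subseteq> lspan R T G" unfolding N'_def L_def by blast
  ultimately have "\<exists>K. finite K \<and> K \<subseteq> N' \<and> N' = lspan R T K" by (rule insert.IH[OF GC])
  then obtain K where K: "finite K" "K \<subseteq> N'" "N' = lspan R T K" by blast
  define H where "H = K \<union> w ` E"
  have HN: "H \<subseteq> N" using K wN unfolding H_def N'_def by auto
  have "N \<subseteq> lspan R T H"
  proof
    fix x assume xN: "x \<in> N"
    then have "x \<in> lspan R T (insert g G)" using insert(6) by blast
    then obtain t m where tm: "x = t \<otimes> g \<oplus> m" "t \<in> T" "m \<in> L"
      using lspan_insert[OF T GC gC] unfolding L_def by auto
    then have "t \<in> J" unfolding J_def using xN by auto
    then obtain z m' where z: "z \<in> lspan R T (w ` E)" "m' \<in> L" "z = t \<otimes> g \<oplus> m'"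
      using claim E by blast
    have zN: "z \<in> N" using lspan_min[OF Nsub wN] z by auto
    have c: "t \<in> carrier R" "m \<in> carrier R" "m' \<in> carrier R" using tm z TC LC by auto
    have "x \<ominus> z = m \<ominus> m'" using tm z c gC by (simp add: minus_cancel_left)
    moreover have "m \<ominus> m' \<in> L" using submod_neg[OF T Lsub LC z(2)] Lsub tm
      unfolding submod_def a_minus_def by auto
    moreover have "x \<ominus> z \<in> N" using submod_neg[OF T Nsub NC zN] Nsub xN
      unfolding submod_def a_minus_def by auto
    ultimately have "x \<ominus> z \<in> lspan R T K" using K unfolding N'_def by auto
    then have "x \<ominus> z \<in> lspan R T H" using lspan_mono[of T T K H] unfolding H_def by auto
    moreover have "z \<in> lspan R T H" using z lspan_mono[of T T "w ` E" H] unfolding H_def by auto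
    ultimately have "(x \<ominus> z) \<oplus> z \<in> lspan R T H" by (rule lspan.ladd)
    moreover have "(x \<ominus> z) \<oplus> z = x" using xN zN NC by (intro minus_plus_cancel) auto
    ultimately show "x \<in> lspan R T H" by simp
  qed
  moreover have "lspan R T H \<subseteq> N" using lspan_min[OF Nsub HN] .
  moreover have "finite H" using K E unfolding H_def by auto
  ultimately show ?case using HN by blast
qed

end

fun Pset :: "('a, 'b) ring_scheme \<Rightarrow> 'a set \<Rightarrow> 'a \<Rightarrow> nat \<Rightarrow> 'a set" where
  "Pset R T a 0 = {\<zero>\<^bsub>R\<^esub>}"
| "Pset R T a (Suc m) = {y \<oplus>\<^bsub>R\<^esub> t \<otimes>\<^bsub>R\<^esub> a [^]\<^bsub>R\<^esub> m | y t. y \<in> Pset R T a m \<and> t \<in> T}"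

declare Pset.simps(2)[simp del]

lemma PsetI: "y \<in> Pset R T a m \<Longrightarrow> t \<in> T \<Longrightarrow> y \<oplus>\<^bsub>R\<^esub> t \<otimes>\<^bsub>R\<^esub> a [^]\<^bsub>R\<^esub> m \<in> Pset R T a (Suc m)"
  by (auto simp: Pset.simps(2))

lemma PsetE: "x \<in> Pset R T a (Suc m) \<Longrightarrow> (\<And>y t. x = y \<oplus>\<^bsub>R\<^esub> t \<otimes>\<^bsub>R\<^esub> a [^]\<^bsub>R\<^esub> m \<Longrightarrow> y \<in> Pset R T a m \<Longrightarrow> t \<in> T \<Longrightarrow> P) \<Longrightarrow> P"
  by (auto simp: Pset.simps(2))

definition adj :: "('a, 'b) ring_scheme \<Rightarrow> 'a set \<Rightarrow> 'a \<Rightarrow> 'a set" where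
  "adj R T a = (\<Union>m. Pset R T a m)"

locale adjctx = cring +
  fixes T a
  assumes T: "subring T R" and aC: "a \<in> carrier R"
begin

lemma TC: "T \<subseteq> carrier R" using subringE(1)[OF T] .
lemma TCI: "t \<in> T \<Longrightarrow> t \<in> carrier R" using TC by auto

lemma Pset_carrier: "x \<in> Pset R T a m \<Longrightarrow> x \<in> carrier R"
proof (induction m arbitrary: x)
  case (Suc m)
  then show ?case using TCI aC by (auto elim!: PsetE)
qed simp

lemma Pset_zero: "\<zero> \<in> Pset R T a m"
proof (induction m)
  case (Suc m)
  have "\<zero> = \<zero> \<oplus> \<zero> \<otimes> a [^] m" using aC by simp
  then show ?case using PsetI[OF Suc subringE(2)[OF T]] by simp
qed simp

lemma Pset_Suc_mono: "Pset R T a m \<subseteq> Pset R T a (Suc m)"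
proof
  fix x assume x: "x \<in> Pset R T a m"
  then have "x = x \<oplus> \<zero> \<otimes> a [^] m" using aC Pset_carrier[OF x] by simp
  then show "x \<in> Pset R T a (Suc m)" using PsetI[OF x subringE(2)[OF T]] by simp
qed

lemma Pset_mono: "m \<le> n \<Longrightarrow> Pset R T a m \<subseteq> Pset R T a n"
  by (induction n rule: dec_induct) (use Pset_Suc_mono in auto)

lemma Pset_add: "x \<in> Pset R T a m \<Longrightarrow> z \<in> Pset R T a m \<Longrightarrow> x \<oplus> z \<in> Pset R T a m"
proof (induction m arbitrary: x z)
  case 0 then show ?case by simp
next
  case (Suc m)
  obtain y t y' t' where yt: "x = y \<oplus> t \<otimes> a [^] m" "y \<in> Pset R T a m" "t \<in> T"
    "z = y' \<oplus> t' \<otimes> a [^] m" "y' \<in> Pset R T a m" "t' \<in> T"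
    using Suc.prems by (auto elim!: PsetE)
  have c: "y \<in> carrier R" "y' \<in> carrier R" "t \<in> carrier R" "t' \<in> carrier R" "a [^] m \<in> carrier R"
    using yt Pset_carrier TCI aC by auto
  have "x \<oplus> z = (y \<oplus> y') \<oplus> (t \<oplus> t') \<otimes> a [^] m" using yt c by (simp add: l_distr a_ac)
  moreover have "y \<oplus> y' \<in> Pset R T a m" using Suc yt by auto
  moreover have "t \<oplus> t' \<in> T" using yt subringE(7)[OF T] by auto
  ultimately show ?case using PsetI by metis
qed

lemma Pset_smult: "s \<in> T \<Longrightarrow> x \<in> Pset R T a m \<Longrightarrow> s \<otimes> x \<in> Pset R T a m"
proof (induction m arbitrary: x)
  case 0 then show ?case using TCI by auto
next
  case (Suc m)
  obtain y t where yt: "x = y \<oplus> t \<otimes> a [^] m" "y \<in> Pset R T a m" "t \<in> T"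
    using Suc.prems by (auto elim!: PsetE)
  have c: "y \<in> carrier R" "s \<in> carrier R" "t \<in> carrier R" "a [^] m \<in> carrier R"
    using yt Suc Pset_carrier TCI aC by auto
  have "s \<otimes> x = s \<otimes> y \<oplus> (s \<otimes> t) \<otimes> a [^] m" using yt c by (simp add: r_distr m_assoc)
  moreover have "s \<otimes> y \<in> Pset R T a m" using Suc yt by auto
  moreover have "s \<otimes> t \<in> T" using yt Suc subringE(6)[OF T] by auto
  ultimately show ?case using PsetI by metis
qed

lemma Pset_neg: "x \<in> Pset R T a m \<Longrightarrow> \<ominus> x \<in> Pset R T a m"
proof -
  assume x: "x \<in> Pset R T a m"
  have "\<ominus> \<one> \<in> T" using subringE(3,5)[OF T] by auto
  then have "(\<ominus> \<one>) \<otimes> x \<in> Pset R T a m" using Pset_smult x by auto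
  then show ?thesis using Pset_carrier[OF x] by (simp add: l_minus)
qed

lemma Pset_mult_a: "x \<in> Pset R T a m \<Longrightarrow> a \<otimes> x \<in> Pset R T a (Suc m)"
proof (induction m arbitrary: x)
  case 0
  then have "a \<otimes> x = \<zero>" using aC by simp
  then show ?case using Pset_zero by simp
next
  case (Suc m)
  obtain y t where yt: "x = y \<oplus> t \<otimes> a [^] m" "y \<in> Pset R T a m" "t \<in> T"
    using Suc.prems by (auto elim!: PsetE)
  have c: "y \<in> carrier R" "t \<in> carrier R" "a [^] m \<in> carrier R"
    using yt Pset_carrier TCI aC by auto
  have "a \<otimes> x = a \<otimes> y \<oplus> t \<otimes> a [^] (Suc m)" using yt c aC
    by (simp add: r_distr m_lcomm m_comm)
  moreover have "a \<otimes> y \<in> Pset R T a (Suc m)" using Suc yt by auto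
  ultimately show ?case using PsetI yt(3) by metis
qed

lemma Pset_mult_pow: "x \<in> Pset R T a m \<Longrightarrow> a [^] k \<otimes> x \<in> Pset R T a (k + m)"
proof (induction k)
  case 0 then show ?case using Pset_carrier by auto
next
  case (Suc k)
  have c: "x \<in> carrier R" using Suc Pset_carrier by auto
  have "a [^] Suc k \<otimes> x = a \<otimes> (a [^] k \<otimes> x)" using c aC
    by (simp add: m_assoc nat_pow_Suc2 m_lcomm)
  then show ?case using Pset_mult_a[OF Suc.IH[OF Suc.prems]] by simp
qed

lemma Pset_term: "t \<in> T \<Longrightarrow> t \<otimes> a [^] m \<in> Pset R T a (Suc m)"
proof -
  assume t: "t \<in> T"
  have eq: "t \<otimes> a [^] m = \<zero> \<oplus> t \<otimes> a [^] m" using TCI[OF t] aC by simp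
  show ?thesis by (subst eq) (rule PsetI[OF Pset_zero t])
qed

lemma Pset_mult: "x \<in> Pset R T a m \<Longrightarrow> z \<in> Pset R T a n \<Longrightarrow> x \<otimes> z \<in> Pset R T a (m + n)"
proof (induction m arbitrary: x)
  case 0 then show ?case using Pset_carrier Pset_zero by auto
next
  case (Suc m)
  obtain y t where yt: "x = y \<oplus> t \<otimes> a [^] m" "y \<in> Pset R T a m" "t \<in> T"
    using Suc.prems by (auto elim!: PsetE)
  have c: "y \<in> carrier R" "t \<in> carrier R" "a [^] m \<in> carrier R" "z \<in> carrier R"
    using yt Suc Pset_carrier TCI aC by auto
  have "x \<otimes> z = y \<otimes> z \<oplus> t \<otimes> (a [^] m \<otimes> z)" using yt c by (simp add: l_distr m_assoc)
  moreover have "y \<otimes> z \<in> Pset R T a (Suc m + n)" using Suc yt Pset_mono[of "m + n" "Suc m + n"] by auto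
  moreover have "t \<otimes> (a [^] m \<otimes> z) \<in> Pset R T a (Suc m + n)"
    using Pset_smult[OF yt(3) Pset_mult_pow[OF Suc.prems(2), of m]] Pset_mono[of "m + n" "Suc m + n"] by auto
  ultimately show ?case using Pset_add by auto
qed

lemma adj_carrier: "adj R T a \<subseteq> carrier R"
  unfolding adj_def using Pset_carrier by auto

lemma pow_in_adj: "t \<in> T \<Longrightarrow> t \<otimes> a [^] (k::nat) \<in> adj R T a"
  using Pset_term unfolding adj_def by blast

lemma T_sub_adj: "T \<subseteq> adj R T a"
proof
  fix t assume t: "t \<in> T"
  then have "t \<otimes> a [^] (0::nat) \<in> adj R T a" using pow_in_adj by blast
  then show "t \<in> adj R T a" using TCI[OF t] by simp
qed

lemma a_in_adj: "a [^] (k::nat) \<in> adj R T a"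
  using pow_in_adj[OF subringE(3)[OF T], of k] aC by simp

lemma a_in_adj1: "a \<in> adj R T a"
  using a_in_adj[of 1] aC by simp

lemma adj_subring: "subring (adj R T a) R"
proof (rule subringI)
  show "adj R T a \<subseteq> carrier R" by (rule adj_carrier)
  show "\<one> \<in> adj R T a" using T_sub_adj subringE(3)[OF T] by auto
  show "\<ominus> h \<in> adj R T a" if "h \<in> adj R T a" for h
    using that Pset_neg unfolding adj_def by auto
  show "h1 \<otimes> h2 \<in> adj R T a" if "h1 \<in> adj R T a" "h2 \<in> adj R T a" for h1 h2
    using that Pset_mult unfolding adj_def by blast
  show "h1 \<oplus> h2 \<in> adj R T a" if hh: "h1 \<in> adj R T a" "h2 \<in> adj R T a" for h1 h2
  proof -
    obtain m n where "h1 \<in> Pset R T a m" "h2 \<in> Pset R T a n" using hh unfolding adj_def by blast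
    then have "h1 \<in> Pset R T a (m + n)" "h2 \<in> Pset R T a (m + n)"
      using Pset_mono[of m "m + n"] Pset_mono[of n "m + n"] by auto
    then show ?thesis using Pset_add unfolding adj_def by blast
  qed
qed

lemma adj_min: assumes S: "subring S R" "T \<subseteq> S" "a \<in> S" shows "adj R T a \<subseteq> S"
proof -
  have "Pset R T a m \<subseteq> S" for m
  proof (induction m)
    case (Suc m)
    show ?case
    proof
      fix x assume "x \<in> Pset R T a (Suc m)"
      then obtain y t where yt: "x = y \<oplus> t \<otimes> a [^] m" "y \<in> Pset R T a m" "t \<in> T" by (auto elim!: PsetE)
      have "a [^] m \<in> S"
      proof (induction m)
        case 0 then show ?case using subringE(3)[OF S(1)] by simp
      next
        case (Suc k) then show ?case using subringE(6)[OF S(1)] S(3) by simp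
      qed
      moreover have "y \<in> S" "t \<in> S" using yt Suc S by auto
      ultimately show "x \<in> S" using yt subringE(6,7)[OF S(1)] by auto
    qed
  qed (use subringE(2)[OF S(1)] in simp)
  then show ?thesis unfolding adj_def by auto
qed

end

context adjctx begin

lemma noeth_adj: assumes nT: "noeth R T" shows "noeth R (adj R T a)"
  unfolding noeth_def
proof (intro allI impI)
  fix I assume "I \<subseteq> adj R T a \<and> submod R (adj R T a) I"
  then have IA: "I \<subseteq> adj R T a" and Isub: "submod R (adj R T a) I" by auto
  have IC: "I \<subseteq> carrier R" using IA adj_carrier by auto
  have I0: "\<zero> \<in> I" and Iadd: "\<And>x y. x \<in> I \<Longrightarrow> y \<in> I \<Longrightarrow> x \<oplus> y \<in> I"
    and Imul: "\<And>s x. s \<in> adj R T a \<Longrightarrow> x \<in> I \<Longrightarrow> s \<otimes> x \<in> I"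
    using Isub unfolding submod_def by auto
  have TA: "subring (adj R T a) R" by (rule adj_subring)
  define Lc where "Lc n = {t \<in> T. \<exists>y \<in> Pset R T a n. t \<otimes> a [^] n \<oplus> y \<in> I}" for n
  have Lc_T: "Lc n \<subseteq> T" for n unfolding Lc_def by auto
  have Lc_sub: "submod R T (Lc n)" for n
    unfolding submod_def
  proof (intro conjI ballI)
    have "\<zero> \<otimes> a [^] n \<oplus> \<zero> = \<zero>" using aC by simp
    then show "\<zero> \<in> Lc n" unfolding Lc_def using subringE(2)[OF T] I0 Pset_zero
      by (auto intro!: bexI[of _ "\<zero>"])
  next
    fix x z assume "x \<in> Lc n" "z \<in> Lc n"
    then obtain y y' where yy: "x \<in> T" "z \<in> T" "y \<in> Pset R T a n" "y' \<in> Pset R T a n"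
      "x \<otimes> a [^] n \<oplus> y \<in> I" "z \<otimes> a [^] n \<oplus> y' \<in> I" unfolding Lc_def by auto
    have c: "x \<in> carrier R" "z \<in> carrier R" "y \<in> carrier R" "y' \<in> carrier R" "a [^] n \<in> carrier R"
      using yy TCI Pset_carrier aC by auto
    have "(x \<otimes> a [^] n \<oplus> y) \<oplus> (z \<otimes> a [^] n \<oplus> y') = (x \<oplus> z) \<otimes> a [^] n \<oplus> (y \<oplus> y')"
      using c by (simp add: l_distr a_ac)
    moreover have "(x \<otimes> a [^] n \<oplus> y) \<oplus> (z \<otimes> a [^] n \<oplus> y') \<in> I" using Iadd yy by blast
    ultimately have "(x \<oplus> z) \<otimes> a [^] n \<oplus> (y \<oplus> y') \<in> I" by simp
    moreover have "y \<oplus> y' \<in> Pset R T a n" using Pset_add yy by auto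
    ultimately show "x \<oplus> z \<in> Lc n" unfolding Lc_def using yy subringE(7)[OF T] by auto
  next
    fix s x assume "s \<in> T" "x \<in> Lc n"
    then obtain y where yy: "s \<in> T" "x \<in> T" "y \<in> Pset R T a n" "x \<otimes> a [^] n \<oplus> y \<in> I"
      unfolding Lc_def by auto
    have c: "x \<in> carrier R" "s \<in> carrier R" "y \<in> carrier R" "a [^] n \<in> carrier R"
      using yy TCI Pset_carrier aC by auto
    have "s \<otimes> (x \<otimes> a [^] n \<oplus> y) = (s \<otimes> x) \<otimes> a [^] n \<oplus> s \<otimes> y"
      using c by (simp add: r_distr m_assoc)
    moreover have "s \<otimes> (x \<otimes> a [^] n \<oplus> y) \<in> I" using Imul yy T_sub_adj by blast
    ultimately have "(s \<otimes> x) \<otimes> a [^] n \<oplus> s \<otimes> y \<in> I" by simp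
    moreover have "s \<otimes> y \<in> Pset R T a n" using Pset_smult yy by auto
    ultimately show "s \<otimes> x \<in> Lc n" unfolding Lc_def using yy subringE(6)[OF T] by auto
  qed
  have Lc_Suc: "Lc n \<subseteq> Lc (Suc n)" for n
  proof
    fix t assume "t \<in> Lc n"
    then obtain y where yy: "t \<in> T" "y \<in> Pset R T a n" "t \<otimes> a [^] n \<oplus> y \<in> I"
      unfolding Lc_def by auto
    have c: "t \<in> carrier R" "y \<in> carrier R" "a [^] n \<in> carrier R"
      using yy TCI Pset_carrier aC by auto
    have e1: "a \<otimes> (t \<otimes> a [^] n) = t \<otimes> a [^] Suc n"
      using nat_pow_Suc2[of a n] m_lcomm[of a t "a [^] n"] c aC by metis
    have "a \<otimes> (t \<otimes> a [^] n \<oplus> y) = t \<otimes> a [^] Suc n \<oplus> a \<otimes> y"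
      using c aC e1 by (simp add: r_distr)
    moreover have "a \<otimes> (t \<otimes> a [^] n \<oplus> y) \<in> I" using Imul yy a_in_adj1 by blast
    ultimately have "t \<otimes> a [^] Suc n \<oplus> a \<otimes> y \<in> I" by simp
    then show "t \<in> Lc (Suc n)" unfolding Lc_def using yy Pset_mult_a by auto
  qed
  have Lc_mono: "m \<le> n \<Longrightarrow> Lc m \<subseteq> Lc n" for m n
    by (induction n rule: dec_induct) (use Lc_Suc in auto)
  define LU where "LU = (\<Union>n. Lc n)"
  have "submod R T LU" unfolding submod_def
  proof (intro conjI ballI)
    show "\<zero> \<in> LU" unfolding LU_def using Lc_sub unfolding submod_def by auto
  next
    fix x y assume "x \<in> LU" "y \<in> LU"
    then obtain m n where "x \<in> Lc m" "y \<in> Lc n" unfolding LU_def by auto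
    then have "x \<in> Lc (m + n)" "y \<in> Lc (m + n)" using Lc_mono[of m "m + n"] Lc_mono[of n "m + n"] by auto
    then have "x \<oplus> y \<in> Lc (m + n)" using Lc_sub unfolding submod_def by auto
    then show "x \<oplus> y \<in> LU" unfolding LU_def by auto
  next
    fix s x assume "s \<in> T" "x \<in> LU"
    then obtain n where "s \<in> T" "x \<in> Lc n" unfolding LU_def by auto
    then have "s \<otimes> x \<in> Lc n" using Lc_sub[of n] unfolding submod_def by blast
    then show "s \<otimes> x \<in> LU" unfolding LU_def by auto
  qed
  moreover have "LU \<subseteq> T" using Lc_T unfolding LU_def by auto
  ultimately obtain EU where EU: "finite EU" "EU \<subseteq> LU" "LU = lspan R T EU"
    using nT unfolding noeth_def by blast
  have "\<forall>e\<in>EU. \<exists>n. e \<in> Lc n" using EU unfolding LU_def by auto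
  from bchoice[OF this] obtain k where k: "\<And>e. e \<in> EU \<Longrightarrow> e \<in> Lc (k e)" by blast
  define N where "N = Max (insert 0 (k ` EU))"
  have "EU \<subseteq> Lc N"
  proof
    fix e assume e: "e \<in> EU"
    have "k e \<le> N" unfolding N_def using EU(1) e by (intro Max_ge) auto
    then show "e \<in> Lc N" using k[OF e] Lc_mono by auto
  qed
  then have LUN: "Lc n \<subseteq> Lc N" for n
    using lspan_min[OF Lc_sub] EU unfolding LU_def by blast
  have "\<forall>n. \<exists>E. finite E \<and> E \<subseteq> Lc n \<and> Lc n = lspan R T E"
    using nT Lc_T Lc_sub unfolding noeth_def by blast
  then obtain En where En: "\<And>n. finite (En n)" "\<And>n. En n \<subseteq> Lc n" "\<And>n. Lc n = lspan R T (En n)"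
    by metis
  define yw where "yw n e = (SOME y. y \<in> Pset R T a n \<and> e \<otimes> a [^] n \<oplus> y \<in> I)" for n e
  have yw: "yw n e \<in> Pset R T a n \<and> e \<otimes> a [^] n \<oplus> yw n e \<in> I" if "e \<in> Lc n" for n e
  proof -
    have "\<exists>y. y \<in> Pset R T a n \<and> e \<otimes> a [^] n \<oplus> y \<in> I" using that unfolding Lc_def by auto
    then show ?thesis unfolding yw_def by (rule someI_ex)
  qed
  define w where "w n e = e \<otimes> a [^] n \<oplus> yw n e" for n e
  have wI: "w n ` En n \<subseteq> I" for n using yw En(2) unfolding w_def by blast
  define Gs where "Gs = (\<Union>n\<in>{..N}. w n ` En n)"
  have Gs_fin: "finite Gs" unfolding Gs_def using En(1) by auto
  have GsI: "Gs \<subseteq> I" unfolding Gs_def using wI by blast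
  have GsC: "Gs \<subseteq> carrier R" using GsI IC by auto
  have claim: "\<exists>z \<in> lspan R (adj R T a) (w n ` En n). \<exists>y' \<in> Pset R T a n. z = t \<otimes> a [^] n \<oplus> y'"
    if "t \<in> lspan R T (En n)" for n t
    using that
  proof (induction rule: lspan.induct)
    case lzero
    have "\<zero> = \<zero> \<otimes> a [^] n \<oplus> \<zero>" using aC by simp
    then show ?case using Pset_zero by (blast intro: lspan.intros)
  next
    case (lgen s e)
    have e: "e \<in> Lc n" using lgen En(2) by auto
    have c: "s \<in> carrier R" "e \<in> carrier R" "yw n e \<in> carrier R" "a [^] n \<in> carrier R"
      using lgen e TCI Lc_T yw[OF e] Pset_carrier aC by auto
    have "s \<otimes> w n e = (s \<otimes> e) \<otimes> a [^] n \<oplus> s \<otimes> yw n e" unfolding w_def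
      using c by (simp add: r_distr m_assoc)
    moreover have "s \<otimes> w n e \<in> lspan R (adj R T a) (w n ` En n)" using lgen T_sub_adj by (auto intro: lspan.intros)
    moreover have "s \<otimes> yw n e \<in> Pset R T a n" using Pset_smult lgen yw[OF e] by auto
    ultimately show ?case by blast
  next
    case (ladd x y)
    then obtain z z' m m' where zz: "z \<in> lspan R (adj R T a) (w n ` En n)" "z' \<in> lspan R (adj R T a) (w n ` En n)"
      "m \<in> Pset R T a n" "m' \<in> Pset R T a n" "z = x \<otimes> a [^] n \<oplus> m" "z' = y \<otimes> a [^] n \<oplus> m'" by blast
    have EnC: "En n \<subseteq> carrier R" using En(2) Lc_T TC by blast
    have c: "x \<in> carrier R" "y \<in> carrier R" "m \<in> carrier R" "m' \<in> carrier R" "a [^] n \<in> carrier R"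
      using ladd.hyps lspan_carrier[OF TC EnC] zz Pset_carrier aC by auto
    have "z \<oplus> z' = (x \<oplus> y) \<otimes> a [^] n \<oplus> (m \<oplus> m')" using zz c by (simp add: l_distr a_ac)
    moreover have "m \<oplus> m' \<in> Pset R T a n" using zz Pset_add by auto
    moreover have "z \<oplus> z' \<in> lspan R (adj R T a) (w n ` En n)" using zz by (auto intro: lspan.intros)
    ultimately show ?case by blast
  qed
  have main: "x \<in> Pset R T a m \<Longrightarrow> x \<in> I \<Longrightarrow> x \<in> lspan R (adj R T a) Gs" for m x
  proof (induction m arbitrary: x)
    case 0 then show ?case by (auto intro: lspan.intros)
  next
    case (Suc m)
    obtain y t where yt: "x = y \<oplus> t \<otimes> a [^] m" "y \<in> Pset R T a m" "t \<in> T"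
      using Suc.prems(1) by (auto elim!: PsetE)
    have c: "y \<in> carrier R" "t \<in> carrier R" "a [^] m \<in> carrier R"
      using yt TCI Pset_carrier aC by auto
    have "t \<otimes> a [^] m \<oplus> y = x" using yt c by (simp add: a_comm)
    then have "t \<otimes> a [^] m \<oplus> y \<in> I" using Suc.prems(2) by simp
    then have tL: "t \<in> Lc m" unfolding Lc_def using yt(2,3) by blast
    define n where "n = min m N"
    have tLn: "t \<in> Lc n"
    proof (cases "m \<le> N")
      case True then show ?thesis using tL unfolding n_def by auto
    next
      case False then show ?thesis using tL LUN unfolding n_def by auto
    qed
    have nN: "n \<le> N" and nm: "n \<le> m" unfolding n_def by auto
    obtain z y' where z: "z \<in> lspan R (adj R T a) (w n ` En n)" "y' \<in> Pset R T a n" "z = t \<otimes> a [^] n \<oplus> y'"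
      using claim[of t n] tLn En(3) by blast
    define k where "k = m - n"
    have km: "k + n = m" unfolding k_def using nm by auto
    have c2: "y' \<in> carrier R" "a [^] n \<in> carrier R" "a [^] k \<in> carrier R" using z Pset_carrier aC by auto
    define q where "q = a [^] k \<otimes> z"
    have "a [^] k \<otimes> (t \<otimes> a [^] n) = t \<otimes> a [^] m" using c c2 km
      using nat_pow_mult[OF aC, of k n] by (simp add: m_lcomm)
    then have q: "q = t \<otimes> a [^] m \<oplus> a [^] k \<otimes> y'" unfolding q_def using z c c2 by (simp add: r_distr)
    have "x \<ominus> q = y \<ominus> a [^] k \<otimes> y'"
      using minus_cancel_left[of "t \<otimes> a [^] m" y "a [^] k \<otimes> y'"] c c2 q \<open>t \<otimes> a [^] m \<oplus> y = x\<close> by simp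
    moreover have "a [^] k \<otimes> y' \<in> Pset R T a m" using Pset_mult_pow[OF z(2), of k] km by simp
    ultimately have xqP: "x \<ominus> q \<in> Pset R T a m" using Pset_add Pset_neg yt unfolding a_minus_def by auto
    have zI: "z \<in> I" using lspan_min[OF Isub wI] z by auto
    have qI: "q \<in> I" unfolding q_def using Imul[OF a_in_adj zI] .
    have xqI: "x \<ominus> q \<in> I" using Iadd[OF Suc.prems(2) submod_neg[OF TA Isub IC qI]] unfolding a_minus_def .
    have "x \<ominus> q \<in> lspan R (adj R T a) Gs" using Suc.IH[OF xqP xqI] .
    moreover have "q \<in> lspan R (adj R T a) Gs"
    proof -
      have "w n ` En n \<subseteq> Gs" unfolding Gs_def using nN by auto
      then have "z \<in> lspan R (adj R T a) Gs" using z lspan_mono[of "adj R T a" "adj R T a" "w n ` En n" Gs] by auto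
      then show ?thesis unfolding q_def using lspan_submod[OF TA GsC order_refl] a_in_adj
        unfolding submod_def by auto
    qed
    ultimately have "(x \<ominus> q) \<oplus> q \<in> lspan R (adj R T a) Gs" by (rule lspan.ladd)
    moreover have "(x \<ominus> q) \<oplus> q = x" using Suc.prems(2) qI IC by (intro minus_plus_cancel) auto
    ultimately show ?case by simp
  qed
  have "I = lspan R (adj R T a) Gs"
  proof
    show "I \<subseteq> lspan R (adj R T a) Gs"
    proof
      fix x assume "x \<in> I"
      then obtain m where "x \<in> Pset R T a m" using IA unfolding adj_def by auto
      then show "x \<in> lspan R (adj R T a) Gs" using main \<open>x \<in> I\<close> by blast
    qed
    show "lspan R (adj R T a) Gs \<subseteq> I" using lspan_min[OF Isub GsI] .
  qed
  then show "\<exists>F. finite F \<and> F \<subseteq> I \<and> I = lspan R (adj R T a) F" using Gs_fin GsI by blast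
qed

end

fun adjl :: "('a, 'b) ring_scheme \<Rightarrow> 'a set \<Rightarrow> 'a list \<Rightarrow> 'a set" where
  "adjl R T [] = T"
| "adjl R T (f # fs) = adjl R (adj R T f) fs"

context cring begin

lemma adjl_props:
  "subring T R \<Longrightarrow> noeth R T \<Longrightarrow> set fs \<subseteq> carrier R \<Longrightarrow>
    subring (adjl R T fs) R \<and> noeth R (adjl R T fs) \<and> T \<subseteq> adjl R T fs \<and> set fs \<subseteq> adjl R T fs \<and>
    (\<forall>S. subring S R \<and> T \<subseteq> S \<and> set fs \<subseteq> S \<longrightarrow> adjl R T fs \<subseteq> S)"
proof (induction fs arbitrary: T)
  case Nil then show ?case by simp
next
  case (Cons f fs)
  interpret A: adjctx R T f using Cons.prems by (simp add: adjctx_def adjctx_axioms_def cring_axioms)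
  have 1: "subring (adj R T f) R" by (rule A.adj_subring)
  have 2: "noeth R (adj R T f)" using A.noeth_adj Cons.prems by auto
  have IH: "subring (adjl R (adj R T f) fs) R \<and> noeth R (adjl R (adj R T f) fs) \<and>
    adj R T f \<subseteq> adjl R (adj R T f) fs \<and> set fs \<subseteq> adjl R (adj R T f) fs \<and>
    (\<forall>S. subring S R \<and> adj R T f \<subseteq> S \<and> set fs \<subseteq> S \<longrightarrow> adjl R (adj R T f) fs \<subseteq> S)"
    using Cons.IH[OF 1 2] Cons.prems by auto
  show ?case
  proof (simp only: adjl.simps, intro conjI allI impI)
    show "subring (adjl R (adj R T f) fs) R" "noeth R (adjl R (adj R T f) fs)" using IH by auto
    show "T \<subseteq> adjl R (adj R T f) fs" using IH A.T_sub_adj by auto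
    show "set (f # fs) \<subseteq> adjl R (adj R T f) fs" using IH A.a_in_adj1 by auto
    fix S assume S: "subring S R \<and> T \<subseteq> S \<and> set (f # fs) \<subseteq> S"
    then have "adj R T f \<subseteq> S" using A.adj_min by auto
    then show "adjl R (adj R T f) fs \<subseteq> S" using IH S by auto
  qed
qed

lemma lspan_mult:
  assumes T: "subring T R" and G: "G \<subseteq> carrier R"
    and GG: "\<And>g h. g \<in> G \<Longrightarrow> h \<in> G \<Longrightarrow> g \<otimes> h \<in> lspan R T G"
    and x: "x \<in> lspan R T G" and y: "y \<in> lspan R T G"
  shows "x \<otimes> y \<in> lspan R T G"
proof -
  have TC: "T \<subseteq> carrier R" using subringE(1)[OF T] .
  note LC = lspan_carrier[OF TC G]
  note sm = lspan_submod[OF T G order_refl, unfolded submod_def]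
  have gen: "(t \<otimes> g) \<otimes> y \<in> lspan R T G" if tg: "t \<in> T" "g \<in> G" and y: "y \<in> lspan R T G" for t g y
    using y
  proof (induction rule: lspan.induct)
    case lzero
    have "t \<in> carrier R" "g \<in> carrier R" using tg TC G by auto
    then have "(t \<otimes> g) \<otimes> \<zero> = \<zero>" by simp
    then show ?case by (simp add: lspan.lzero)
  next
    case (lgen s h)
    have c: "t \<in> carrier R" "s \<in> carrier R" "g \<in> carrier R" "h \<in> carrier R" using tg lgen TC G by auto
    have "(t \<otimes> g) \<otimes> (s \<otimes> h) = (t \<otimes> s) \<otimes> (g \<otimes> h)" using c by (simp add: m_ac)
    moreover have "t \<otimes> s \<in> T" using tg lgen subringE(6)[OF T] by auto
    ultimately show ?case using GG[OF tg(2) lgen(2)] sm by auto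
  next
    case (ladd y1 y2)
    have c: "t \<in> carrier R" "g \<in> carrier R" "y1 \<in> carrier R" "y2 \<in> carrier R"
      using tg ladd.hyps TC G LC by auto
    have "(t \<otimes> g) \<otimes> (y1 \<oplus> y2) = (t \<otimes> g) \<otimes> y1 \<oplus> (t \<otimes> g) \<otimes> y2" using c by (simp add: r_distr)
    then show ?case using ladd by (auto intro: lspan.intros)
  qed
  show ?thesis using x
  proof (induction rule: lspan.induct)
    case lzero then show ?case using y LC by (auto intro: lspan.intros)
  next
    case (lgen t g) then show ?case using gen y by auto
  next
    case (ladd x1 x2)
    have "(x1 \<oplus> x2) \<otimes> y = x1 \<otimes> y \<oplus> x2 \<otimes> y" using ladd.hyps y LC by (simp add: l_distr)
    then show ?case using ladd by (auto intro: lspan.intros)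
  qed
qed

lemma artin_tate:
  assumes K: "subring K R" and nK: "noeth R K" and KB: "K \<subseteq> B" and B: "subring B R"
    and S0: "finite S0" "S0 \<subseteq> carrier R" and gen: "carrier R = generate_ring R (K \<union> S0)"
    and G: "finite G" "G \<subseteq> carrier R" and span: "carrier R \<subseteq> lspan R B G"
  shows "\<exists>S. finite S \<and> S \<subseteq> B \<and> B = generate_ring R (K \<union> S)"
proof -
  have KC: "K \<subseteq> carrier R" using subringE(1)[OF K] .
  have BC: "B \<subseteq> carrier R" using subringE(1)[OF B] .
  define Q where "Q = S0 \<union> {\<one>} \<union> (\<lambda>(g, h). g \<otimes> h) ` (G \<times> G)"
  have Qfin: "finite Q" unfolding Q_def using S0 G by auto
  have QC: "Q \<subseteq> carrier R" unfolding Q_def using S0 G by auto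
  have "\<forall>q\<in>Q. \<exists>F. finite F \<and> F \<subseteq> B \<and> q \<in> lspan R F G"
  proof
    fix q assume "q \<in> Q"
    then have "q \<in> lspan R B G" using QC span by auto
    from lspan_fin_coeffs[OF this] show "\<exists>F. finite F \<and> F \<subseteq> B \<and> q \<in> lspan R F G" .
  qed
  from bchoice[OF this] obtain Fq where Fq: "\<And>q. q \<in> Q \<Longrightarrow> finite (Fq q) \<and> Fq q \<subseteq> B \<and> q \<in> lspan R (Fq q) G"
    by blast
  define F where "F = (\<Union>q\<in>Q. Fq q)"
  have Ffin: "finite F" unfolding F_def using Qfin Fq by auto
  have FB: "F \<subseteq> B" unfolding F_def using Fq by auto
  obtain fs where fs: "set fs = F" using finite_list[OF Ffin] by blast
  define T0 where "T0 = adjl R K fs"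
  have P: "subring T0 R \<and> noeth R T0 \<and> K \<subseteq> T0 \<and> F \<subseteq> T0 \<and>
    (\<forall>S. subring S R \<and> K \<subseteq> S \<and> F \<subseteq> S \<longrightarrow> T0 \<subseteq> S)"
    using adjl_props[OF K nK, of fs] fs FB BC unfolding T0_def by auto
  have T0: "subring T0 R" and nT0: "noeth R T0" and KT0: "K \<subseteq> T0" and FT0: "F \<subseteq> T0"
    using P by auto
  have T0B: "T0 \<subseteq> B" using P B KB FB by auto
  have T0C: "T0 \<subseteq> carrier R" using subringE(1)[OF T0] .
  define M where "M = lspan R T0 G"
  have QM: "Q \<subseteq> M"
  proof
    fix q assume q: "q \<in> Q"
    have "Fq q \<subseteq> T0" using q FT0 unfolding F_def by auto
    then show "q \<in> M" using Fq[OF q] lspan_mono[of "Fq q" T0 G G] unfolding M_def by auto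
  qed
  note Msm = lspan_submod[OF T0 G(2) order_refl, folded M_def, unfolded submod_def]
  have oneM: "\<one> \<in> M" using QM unfolding Q_def by auto
  have "subring M R"
  proof (rule subringI)
    show "M \<subseteq> carrier R" unfolding M_def using lspan_carrier[OF T0C G(2)] by auto
    show "\<one> \<in> M" using QM unfolding Q_def by auto
    show "\<ominus> h \<in> M" if "h \<in> M" for h using lspan_neg[OF T0 G(2)] that unfolding M_def by auto
    show "h1 \<oplus> h2 \<in> M" if "h1 \<in> M" "h2 \<in> M" for h1 h2 using that unfolding M_def by (rule lspan.ladd)
    show "h1 \<otimes> h2 \<in> M" if "h1 \<in> M" "h2 \<in> M" for h1 h2
      using lspan_mult[OF T0 G(2) _ that[unfolded M_def]] QM unfolding M_def Q_def by blast
  qed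
  moreover have "K \<union> S0 \<subseteq> M"
  proof -
    have "k \<in> M" if "k \<in> K" for k
    proof -
      have "k \<otimes> \<one> \<in> M" using Msm oneM KT0 that by auto
      then show ?thesis using that KC by auto
    qed
    then show ?thesis using QM unfolding Q_def by auto
  qed
  ultimately have "carrier R \<subseteq> M" using generate_ring_min_subring1[of "K \<union> S0" M] gen KC S0 by auto
  then have BM: "B \<subseteq> lspan R T0 G" using BC unfolding M_def by auto
  have "submod R T0 B" unfolding submod_def using subringE(2,6,7)[OF B] T0B by auto
  then obtain H where H: "finite H" "H \<subseteq> B" "B = lspan R T0 H"
    using noeth_submod_fg[OF T0 nT0 G(1) G(2)] BM by blast
  define S where "S = F \<union> H"
  have SB: "S \<subseteq> B" unfolding S_def using FB H by auto
  have KSC: "K \<union> S \<subseteq> carrier R" using KC SB BC by auto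
  have "generate_ring R (K \<union> S) \<subseteq> B"
    using generate_ring_min_subring1[OF KSC B] KB SB by auto
  moreover have "B \<subseteq> generate_ring R (K \<union> S)"
  proof -
    have GS: "subring (generate_ring R (K \<union> S)) R" using generate_ring_is_subring[OF KSC] .
    have "K \<union> S \<subseteq> generate_ring R (K \<union> S)" by (auto intro: generate_ring.incl)
    then have "T0 \<subseteq> generate_ring R (K \<union> S)" using P GS unfolding S_def by auto
    then have "submod R T0 (generate_ring R (K \<union> S))" unfolding submod_def
      using subringE(2,6,7)[OF GS] by auto
    moreover have "H \<subseteq> generate_ring R (K \<union> S)" unfolding S_def by (auto intro: generate_ring.incl)
    ultimately show ?thesis using lspan_min H(3) by auto
  qed
  ultimately show ?thesis using Ffin H SB unfolding S_def by auto
qed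

lemma noeth_scalars:
  assumes "is_calg R \<iota>"
  shows "subring (range \<iota>) R" and "noeth R (range \<iota>)"
proof -
  have i: "\<And>c. \<iota> c \<in> carrier R" "\<iota> 0 = \<zero>" "\<iota> 1 = \<one>" "\<And>a b. \<iota> (a + b) = \<iota> a \<oplus> \<iota> b"
    "\<And>a b. \<iota> (a * b) = \<iota> a \<otimes> \<iota> b" using assms unfolding is_calg_def by auto
  have neg: "\<ominus> \<iota> c = \<iota> (- c)" for c
  proof -
    have "\<iota> (- c) \<oplus> \<iota> c = \<zero>" using i(2) i(4)[of "- c" c] by simp
    then show ?thesis using i(1) by (metis l_neg minus_equality)
  qed
  show sr: "subring (range \<iota>) R"
  proof (rule subringI)
    show "range \<iota> \<subseteq> carrier R" using i by auto
    show "\<one> \<in> range \<iota>" using i(3) rangeI[of \<iota> 1] by simp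
    show "\<ominus> h \<in> range \<iota>" if "h \<in> range \<iota>" for h using that neg by auto
    show "h1 \<otimes> h2 \<in> range \<iota>" if hh: "h1 \<in> range \<iota>" "h2 \<in> range \<iota>" for h1 h2
    proof -
      obtain a b where "h1 = \<iota> a" "h2 = \<iota> b" using hh by auto
      then have "h1 \<otimes> h2 = \<iota> (a * b)" using i(5) by simp
      then show ?thesis by simp
    qed
    show "h1 \<oplus> h2 \<in> range \<iota>" if hh: "h1 \<in> range \<iota>" "h2 \<in> range \<iota>" for h1 h2
    proof -
      obtain a b where "h1 = \<iota> a" "h2 = \<iota> b" using hh by auto
      then have "h1 \<oplus> h2 = \<iota> (a + b)" using i(4) by simp
      then show ?thesis by simp
    qed
  qed
  show "noeth R (range \<iota>)"
    unfolding noeth_def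
  proof (intro allI impI)
    fix I assume I: "I \<subseteq> range \<iota> \<and> submod R (range \<iota>) I"
    show "\<exists>F. finite F \<and> F \<subseteq> I \<and> I = lspan R (range \<iota>) F"
    proof (cases "I \<subseteq> {\<zero>}")
      case True
      then have "I = {\<zero>}" using I unfolding submod_def by auto
      then show ?thesis using lspan_empty by (intro exI[of _ "{}"]) auto
    next
      case False
      then obtain c where c: "\<iota> c \<in> I" "\<iota> c \<noteq> \<zero>" using I by auto
      then have c0: "c \<noteq> 0" using i(2) by auto
      have "\<iota> (inverse c) \<otimes> \<iota> c = \<one>" using i(5)[of "inverse c" c] i(3) c0 by simp
      moreover have "\<iota> (inverse c) \<otimes> \<iota> c \<in> I" using I c unfolding submod_def by auto
      ultimately have one: "\<one> \<in> I" by simp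
      have "I = lspan R (range \<iota>) {\<one>}"
      proof
        show "I \<subseteq> lspan R (range \<iota>) {\<one>}"
        proof
          fix x assume "x \<in> I"
          then obtain d where d: "x = \<iota> d" using I by auto
          have "\<iota> d \<otimes> \<one> \<in> lspan R (range \<iota>) {\<one>}" by (auto intro: lspan.intros)
          then show "x \<in> lspan R (range \<iota>) {\<one>}" using d i(1) by simp
        qed
        show "lspan R (range \<iota>) {\<one>} \<subseteq> I" using lspan_min I one by auto
      qed
      then show ?thesis using one by (intro exI[of _ "{\<one>}"]) auto
    qed
  qed
qed

end

context cring begin

lemma minus_zero_eq: "x \<in> carrier R \<Longrightarrow> y \<in> carrier R \<Longrightarrow> x \<ominus> y = \<zero> \<Longrightarrow> x = y"
  using minus_plus_cancel[of x y] by simp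

lemma mult_op_comp: "r \<in> carrier R \<Longrightarrow> r' \<in> carrier R \<Longrightarrow>
    op_comp R (mult_op R r) (mult_op R r') = mult_op R (r \<otimes> r')"
  unfolding op_comp_def mult_op_def by (auto simp: m_assoc)

lemma mult_op_add: "r \<in> carrier R \<Longrightarrow> r' \<in> carrier R \<Longrightarrow>
    op_add R (mult_op R r) (mult_op R r') = mult_op R (r \<oplus> r')"
  unfolding op_add_def mult_op_def by (auto simp: l_distr)

lemma op_zero_mult: "op_zero R = mult_op R \<zero>"
  unfolding op_zero_def mult_op_def by auto

lemma commutator_mult: "r \<in> carrier R \<Longrightarrow> r' \<in> carrier R \<Longrightarrow>
    commutator R (mult_op R r) r' = op_zero R"
  unfolding commutator_def op_minus_def op_comp_def mult_op_def op_zero_def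
  by (auto simp: m_lcomm[of r r'] r_neg a_minus_def)

lemma clinear_mult: assumes "\<And>c. \<iota> c \<in> carrier R" and r: "r \<in> carrier R"
  shows "clinear R \<iota> (mult_op R r)"
  unfolding clinear_def mult_op_def using assms by (auto simp: r_distr m_lcomm)

lemma op_zero_diffop: assumes "\<And>c. \<iota> c \<in> carrier R" shows "op_zero R \<in> diffop_le R \<iota> n"
proof -
  have cl: "clinear R \<iota> (op_zero R)" using clinear_mult[OF assms zero_closed] unfolding op_zero_mult .
  have co: "\<And>r. r \<in> carrier R \<Longrightarrow> commutator R (op_zero R) r = op_zero R"
    using commutator_mult[OF zero_closed] unfolding op_zero_mult .
  show ?thesis
  proof (induction n)
    case 0 then show ?case using cl co by simp
  next
    case (Suc n) then show ?case using cl co by simp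
  qed
qed

lemma mult_op_diffop: assumes "\<And>c. \<iota> c \<in> carrier R" and r: "r \<in> carrier R"
  shows "mult_op R r \<in> diffop_le R \<iota> n"
proof -
  have cl: "clinear R \<iota> (mult_op R r)" using clinear_mult[OF assms] .
  have co: "\<And>r'. r' \<in> carrier R \<Longrightarrow> commutator R (mult_op R r) r' = op_zero R"
    using commutator_mult[OF r] .
  show ?thesis
  proof (cases n)
    case 0 then show ?thesis using cl co by simp
  next
    case (Suc m) then show ?thesis using cl co op_zero_diffop[OF assms(1)] by simp
  qed
qed

lemma diffop0_mult:
  assumes phi: "\<phi> \<in> diffop_le R \<iota> 0"
  shows "\<phi> \<one> \<in> carrier R \<and> \<phi> = mult_op R (\<phi> \<one>)"
proof -
  have cl: "clinear R \<iota> \<phi>" and com: "\<And>r. r \<in> carrier R \<Longrightarrow> commutator R \<phi> r = op_zero R"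
    using phi by auto
  have fC: "\<phi> \<in> carrier R \<rightarrow> carrier R" and fU: "\<And>x. x \<notin> carrier R \<Longrightarrow> \<phi> x = undefined"
    using cl unfolding clinear_def by auto
  have p1: "\<phi> \<one> \<in> carrier R" using fC by auto
  have eq: "\<phi> x = mult_op R (\<phi> \<one>) x" for x
  proof (cases "x \<in> carrier R")
    case True
    have px: "\<phi> x \<in> carrier R" using fC True by auto
    have "commutator R \<phi> x \<one> = \<zero>" using com[OF True] unfolding op_zero_def by simp
    then have "\<phi> (x \<otimes> \<one>) \<ominus> x \<otimes> \<phi> \<one> = \<zero>"
      unfolding commutator_def op_minus_def op_comp_def mult_op_def using True p1 by simp
    then have "\<phi> x \<ominus> x \<otimes> \<phi> \<one> = \<zero>" using True by simp
    then have "\<phi> x = x \<otimes> \<phi> \<one>" using minus_zero_eq[of "\<phi> x" "x \<otimes> \<phi> \<one>"] px p1 True by simp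
    then show ?thesis unfolding mult_op_def using True p1 by (simp add: m_comm)
  next
    case False
    then show ?thesis using fU unfolding mult_op_def by auto
  qed
  have "\<phi> = mult_op R (\<phi> \<one>)" by (rule ext) (rule eq)
  then show ?thesis using p1 by blast
qed

lemma foldr_gr_add_at:
  "(foldr (gr_add R) L (gr_zero R)) d = foldr (op_add R) (map (\<lambda>s. s d) L) (op_zero R)"
  by (induction L) (auto simp: gr_add_def gr_zero_def)

lemma gr_mul_0: "gr_mul R a g 0 = op_add R (op_comp R (a 0) (g 0)) (op_zero R)"
  unfolding gr_mul_def op_sum_def by simp

lemma foldr_eval:
  assumes "\<forall>p\<in>set zs. \<exists>\<alpha> \<gamma>. \<alpha> \<in> B \<and> \<gamma> \<in> \<Gamma> \<and> \<gamma> \<in> carrier R \<and> \<alpha> \<in> carrier R \<and>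
      fst p 0 = mult_op R \<alpha> \<and> snd p 0 = mult_op R \<gamma>"
    and BC: "B \<subseteq> carrier R" and GC: "\<Gamma> \<subseteq> carrier R"
  shows "(foldr (op_add R) (map (\<lambda>s. s 0) (map (case_prod (gr_mul R)) zs)) (op_zero R)) \<one> \<in> lspan R B \<Gamma>"
  using assms(1)
proof (induction zs)
  case Nil then show ?case by (simp add: op_zero_def lspan.lzero)
next
  case (Cons p zs)
  obtain a g where p: "p = (a, g)" by (cases p)
  obtain \<alpha> \<gamma> where ag: "\<alpha> \<in> B" "\<gamma> \<in> \<Gamma>" "\<gamma> \<in> carrier R" "\<alpha> \<in> carrier R" "a 0 = mult_op R \<alpha>" "g 0 = mult_op R \<gamma>"
    using Cons.prems p by auto
  define rest where "rest = foldr (op_add R) (map (\<lambda>s. s 0) (map (case_prod (gr_mul R)) zs)) (op_zero R)"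
  have IH: "rest \<one> \<in> lspan R B \<Gamma>" using Cons unfolding rest_def by auto
  have "(foldr (op_add R) (map (\<lambda>s. s 0) (map (case_prod (gr_mul R)) (p # zs))) (op_zero R)) \<one>
      = \<alpha> \<otimes> \<gamma> \<oplus> rest \<one>"
    using ag p unfolding rest_def
    by (simp add: gr_mul_0 op_add_def op_comp_def mult_op_def op_zero_def)
  moreover have "\<alpha> \<otimes> \<gamma> \<in> lspan R B \<Gamma>" using ag by (auto intro: lspan.lgen)
  ultimately show ?case using IH by (simp add: lspan.ladd)
qed

lemma lspan_finsum:
  assumes T: "subring T R" and G: "finite G" "G \<subseteq> carrier R" and x: "x \<in> lspan R T G"
  shows "\<exists>a \<in> G \<rightarrow> T. x = finsum R (\<lambda>g. a g \<otimes> g) G"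
  using x
proof (induction rule: lspan.induct)
  case lzero
  have "finsum R (\<lambda>g. \<zero> \<otimes> g) G = finsum R (\<lambda>g. \<zero>) G"
    by (rule finsum_cong') (use G in auto)
  then have "\<zero> = finsum R (\<lambda>g. \<zero> \<otimes> g) G" by simp
  then show ?case using subringE(2)[OF T] by (intro bexI[of _ "\<lambda>_. \<zero>"]) auto
next
  case (lgen t g)
  have tc: "t \<in> carrier R" using lgen subringE(1)[OF T] by auto
  have "finsum R (\<lambda>h. (if h = g then t else \<zero>) \<otimes> h) G = finsum R (\<lambda>h. if g = h then t \<otimes> h else \<zero>) G"
    by (rule finsum_cong') (use G tc in auto)
  also have "\<dots> = t \<otimes> g" by (rule finsum_singleton) (use G tc lgen in auto)
  finally show ?case using lgen subringE(2)[OF T] by (intro bexI[of _ "\<lambda>h. if h = g then t else \<zero>"]) auto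
next
  case (ladd x y)
  obtain a b where ab: "a \<in> G \<rightarrow> T" "x = finsum R (\<lambda>g. a g \<otimes> g) G" "b \<in> G \<rightarrow> T" "y = finsum R (\<lambda>g. b g \<otimes> g) G"
    using ladd.IH by blast
  have TC: "T \<subseteq> carrier R" using subringE(1)[OF T] .
  have "finsum R (\<lambda>g. (a g \<oplus> b g) \<otimes> g) G = finsum R (\<lambda>g. a g \<otimes> g \<oplus> b g \<otimes> g) G"
    by (rule finsum_cong') (use G ab TC in \<open>auto simp: l_distr Pi_def subset_iff\<close>)
  also have "\<dots> = finsum R (\<lambda>g. a g \<otimes> g) G \<oplus> finsum R (\<lambda>g. b g \<otimes> g) G"
    by (rule finsum_addf) (use G ab TC in \<open>auto simp: Pi_def subset_iff\<close>)
  finally have "x \<oplus> y = finsum R (\<lambda>g. (a g \<oplus> b g) \<otimes> g) G" using ab by simp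
  moreover have "(\<lambda>g. a g \<oplus> b g) \<in> G \<rightarrow> T" using ab subringE(7)[OF T] by auto
  ultimately show ?case by (intro bexI[of _ "\<lambda>g. a g \<oplus> b g"]) simp_all
qed

end

context cring begin

lemma main_result:
  assumes ic: "is_calg R \<iota>" and fgc: "fg_calg R \<iota> (carrier R)"
    and sa: "diffop_subalgebra R \<iota> \<A>" and gc: "graded_cofinite R \<iota> \<A>"
  shows "fg_calg R \<iota> (base_ring R \<A>) \<and> fg_module_over R (base_ring R \<A>)"
proof -
  have iC: "\<And>c. \<iota> c \<in> carrier R" and i0: "\<iota> 0 = \<zero>" and i1: "\<iota> 1 = \<one>"
    and iadd: "\<And>a b. \<iota> (a + b) = \<iota> a \<oplus> \<iota> b"
    using ic unfolding is_calg_def by auto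
  have A1: "mult_op R \<one> \<in> \<A>"
    and Acl: "\<And>\<phi> \<psi>. \<phi> \<in> \<A> \<Longrightarrow> \<psi> \<in> \<A> \<Longrightarrow> op_add R \<phi> \<psi> \<in> \<A> \<and> op_comp R \<phi> \<psi> \<in> \<A>"
    and Asc: "\<And>c \<phi>. \<phi> \<in> \<A> \<Longrightarrow> op_comp R (mult_op R (\<iota> c)) \<phi> \<in> \<A>"
    using sa unfolding diffop_subalgebra_def by auto
  define B where "B = base_ring R \<A>"
  have Bmem: "b \<in> B \<longleftrightarrow> b \<in> carrier R \<and> mult_op R b \<in> \<A>" for b
    unfolding B_def base_ring_def by auto
  have BC: "B \<subseteq> carrier R" using Bmem by auto
  have iB: "\<iota> c \<in> B" for c
  proof -
    have "op_comp R (mult_op R (\<iota> c)) (mult_op R \<one>) \<in> \<A>" using Asc A1 by auto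
    then show ?thesis using Bmem mult_op_comp[OF iC one_closed] iC by simp
  qed
  have im1: "\<iota> (- 1) = \<ominus> \<one>"
  proof -
    have "\<iota> (- 1) \<oplus> \<one> = \<zero>" using iadd[of "- 1" 1] i0 i1 by simp
    then show ?thesis using minus_equality[of "\<iota> (- 1)" "\<one>"] iC by simp
  qed
  have Bsub: "subring B R"
  proof (rule subringI)
    show "B \<subseteq> carrier R" by (rule BC)
    show "\<one> \<in> B" using Bmem A1 by simp
    show "\<ominus> h \<in> B" if h: "h \<in> B" for h
    proof -
      have hc: "h \<in> carrier R" "mult_op R h \<in> \<A>" using h Bmem by auto
      have "op_comp R (mult_op R (\<iota> (- 1))) (mult_op R h) \<in> \<A>" using Asc hc by auto
      then have "mult_op R (\<ominus> \<one> \<otimes> h) \<in> \<A>" using mult_op_comp[OF iC hc(1), of "- 1"] im1 by simp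
      then show ?thesis using hc Bmem by (simp add: l_minus)
    qed
    show "h1 \<otimes> h2 \<in> B" if hh: "h1 \<in> B" "h2 \<in> B" for h1 h2
    proof -
      have c: "h1 \<in> carrier R" "h2 \<in> carrier R" "mult_op R h1 \<in> \<A>" "mult_op R h2 \<in> \<A>" using hh Bmem by auto
      then have "op_comp R (mult_op R h1) (mult_op R h2) \<in> \<A>" using Acl by blast
      then show ?thesis using c mult_op_comp[OF c(1,2)] Bmem by simp
    qed
    show "h1 \<oplus> h2 \<in> B" if hh: "h1 \<in> B" "h2 \<in> B" for h1 h2
    proof -
      have c: "h1 \<in> carrier R" "h2 \<in> carrier R" "mult_op R h1 \<in> \<A>" "mult_op R h2 \<in> \<A>" using hh Bmem by auto
      then have "op_add R (mult_op R h1) (mult_op R h2) \<in> \<A>" using Acl by blast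
      then show ?thesis using c mult_op_add[OF c(1,2)] Bmem by simp
    qed
  qed
  obtain gs where gs1: "\<forall>g\<in>set gs. gr_elem R \<iota> (diffops R \<iota>) g"
    and gs2: "\<forall>s. gr_elem R \<iota> (diffops R \<iota>) s \<longrightarrow>
           (\<exists>as. length as = length gs \<and> (\<forall>a\<in>set as. gr_elem R \<iota> \<A> a) \<and>
              gr_eq R \<iota> s (foldr (gr_add R) (map2 (gr_mul R) as gs) (gr_zero R)))"
    using gc unfolding graded_cofinite_def by blast
  define \<Gamma> where "\<Gamma> = (\<lambda>g. g 0 \<one>) ` set gs"
  have g0: "g 0 \<one> \<in> carrier R \<and> g 0 = mult_op R (g 0 \<one>)" if "g \<in> set gs" for g
  proof -
    have "g 0 \<in> diffop_le R \<iota> 0" using gs1 that unfolding gr_elem_def by blast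
    then show ?thesis by (rule diffop0_mult)
  qed
  have GC: "\<Gamma> \<subseteq> carrier R" unfolding \<Gamma>_def using g0 by blast
  have Gfin: "finite \<Gamma>" unfolding \<Gamma>_def by auto
  have span: "carrier R \<subseteq> lspan R B \<Gamma>"
  proof
    fix r assume r: "r \<in> carrier R"
    define s where "s = (\<lambda>d::nat. if d = 0 then mult_op R r else op_zero R)"
    have "gr_elem R \<iota> (diffops R \<iota>) s"
      unfolding gr_elem_def
    proof
      show "\<forall>d. s d \<in> diffops R \<iota> \<inter> diffop_le R \<iota> d"
      proof
        fix d
        have "s d \<in> diffop_le R \<iota> d" unfolding s_def
          using mult_op_diffop[of \<iota>, OF iC r, of d] op_zero_diffop[of \<iota>, OF iC, of d] by (auto simp del: diffop_le.simps)
        then show "s d \<in> diffops R \<iota> \<inter> diffop_le R \<iota> d" unfolding diffops_def by auto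
      qed
      have "{d. s d \<notin> diffop_prev R \<iota> d} \<subseteq> {0}"
        unfolding s_def diffop_prev_def using op_zero_diffop[of \<iota>, OF iC] by auto
      then show "finite {d. s d \<notin> diffop_prev R \<iota> d}" using finite_subset by blast
    qed
    then obtain as where as: "\<forall>a\<in>set as. gr_elem R \<iota> \<A> a"
      and eq: "gr_eq R \<iota> s (foldr (gr_add R) (map2 (gr_mul R) as gs) (gr_zero R))"
      using gs2 by blast
    define Xf where "Xf = foldr (op_add R) (map (\<lambda>s. s 0) (map (case_prod (gr_mul R)) (zip as gs))) (op_zero R)"
    have "op_minus R (s 0) Xf \<in> diffop_prev R \<iota> 0"
      using eq unfolding gr_eq_def Xf_def foldr_gr_add_at by blast
    then have "op_minus R (mult_op R r) Xf = op_zero R" unfolding s_def diffop_prev_def by simp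
    then have "op_minus R (mult_op R r) Xf \<one> = \<zero>" unfolding op_zero_def by simp
    then have e1: "r \<ominus> Xf \<one> = \<zero>" unfolding op_minus_def mult_op_def using r by simp
    have "\<forall>p\<in>set (zip as gs). \<exists>\<alpha> \<gamma>. \<alpha> \<in> B \<and> \<gamma> \<in> \<Gamma> \<and> \<gamma> \<in> carrier R \<and> \<alpha> \<in> carrier R \<and>
      fst p 0 = mult_op R \<alpha> \<and> snd p 0 = mult_op R \<gamma>"
    proof
      fix p assume p: "p \<in> set (zip as gs)"
      obtain a g where ag: "p = (a, g)" by (cases p)
      have a: "a \<in> set as" and g: "g \<in> set gs" using p ag by (auto dest: set_zip_leftD set_zip_rightD)
      have a0: "a 0 \<in> \<A>" "a 0 \<in> diffop_le R \<iota> 0" using as a unfolding gr_elem_def by blast+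
      have am: "a 0 \<one> \<in> carrier R \<and> a 0 = mult_op R (a 0 \<one>)" using diffop0_mult[OF a0(2)] .
      have "mult_op R (a 0 \<one>) \<in> \<A>" using a0(1) am[THEN conjunct2] by metis
      then have "a 0 \<one> \<in> B" using am[THEN conjunct1] Bmem by blast
      moreover have "g 0 \<one> \<in> \<Gamma>" unfolding \<Gamma>_def using g by auto
      moreover have "fst p 0 = mult_op R (a 0 \<one>)"
      proof -
        have fa: "fst p 0 = a 0" using ag by simp
        show ?thesis using trans[OF fa am[THEN conjunct2]] .
      qed
      moreover have "snd p 0 = mult_op R (g 0 \<one>)"
      proof -
        have fa: "snd p 0 = g 0" using ag by simp
        show ?thesis using trans[OF fa g0[OF g, THEN conjunct2]] .
      qed
      ultimately show "\<exists>\<alpha> \<gamma>. \<alpha> \<in> B \<and> \<gamma> \<in> \<Gamma> \<and> \<gamma> \<in> carrier R \<and> \<alpha> \<in> carrier R \<and>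
        fst p 0 = mult_op R \<alpha> \<and> snd p 0 = mult_op R \<gamma>"
        using am g0[OF g] by blast
    qed
    then have XL: "Xf \<one> \<in> lspan R B \<Gamma>" unfolding Xf_def by (rule foldr_eval[OF _ BC GC])
    have "Xf \<one> \<in> carrier R" using lspan_carrier[OF BC GC XL] .
    then have "r = Xf \<one>" using minus_zero_eq[OF r _ e1] by simp
    then show "r \<in> lspan R B \<Gamma>" using XL by simp
  qed
  have "fg_module_over R B"
    unfolding fg_module_over_def
    using Gfin GC span lspan_finsum[OF Bsub Gfin GC] by blast
  moreover have "fg_calg R \<iota> B"
  proof -
    obtain S0 where S0: "finite S0" "S0 \<subseteq> carrier R" "carrier R = generate_ring R (range \<iota> \<union> S0)"
      using fgc unfolding fg_calg_def by blast
    have "\<exists>S. finite S \<and> S \<subseteq> B \<and> B = generate_ring R (range \<iota> \<union> S)"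
      by (rule artin_tate[OF noeth_scalars[OF ic] _ Bsub S0 Gfin GC span]) (use iB in auto)
    then show ?thesis unfolding fg_calg_def .
  qed
  ultimately show ?thesis unfolding B_def by auto
qed

end

theorem proposition2p1:
  fixes R :: "('a, 'b) ring_scheme" and \<iota> :: "complex \<Rightarrow> 'a" and \<A> :: "('a \<Rightarrow> 'a) set"
  assumes "affine_variety R \<iota>"
    and "diffop_subalgebra R \<iota> \<A>"
    and "graded_cofinite R \<iota> \<A>"
  shows "fg_calg R \<iota> (base_ring R \<A>) \<and> fg_module_over R (base_ring R \<A>)"
proof -
  have "domain R" "is_calg R \<iota>" "fg_calg R \<iota> (carrier R)"
    using assms(1) unfolding affine_variety_def by auto
  then have "cring R" by (simp add: domain_def)
  then show ?thesis using cring.main_result assms(2,3) \<open>is_calg R \<iota>\<close> \<open>fg_calg R \<iota> (carrier R)\<close> by blast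
qed


end
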